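(* Let $G$ be a group and $R$ a retract of $G$. Suppose $G$ is weakly hyperbolic relative to a collection of subgroups $\mathcal A=\{A_1,\ldots,A_m\}$ with $A_i\le R$ for all $i=1,\ldots,m$. Then $R$ is weakly hyperbolic relative to $\mathcal A$.
   Context: $R\le G$ is a retract if there is a homomorphism $G\to R$ restricting to the identity on $R$. For a group $G$ and a collection $\mathcal H=\{H_1,\ldots,H_m\}$ of subgroups, $X\subset G$ is a relative generating set if $G$ is generated by $X\cup H_1\cup\cdots\cup H_m$; the relative Cayley graph is the Cayley graph of $G$ with respect to $X\cup H_1\cup\cdots\cup H_m$ with combinatorial metric; $G$ is weakly hyperbolic relative to $\mathcal H$ if for some finite relative generating set $X$ this relative Cayley graph is hyperbolic. *)

theory Defs
  imports "HOL-Algebra.Algebra"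
begin

definition word_dist :: "('a, 'b) monoid_scheme \<Rightarrow> 'a set \<Rightarrow> 'a \<Rightarrow> 'a \<Rightarrow> nat" where
  "word_dist G S g h = (LEAST n. \<exists>ws. length ws = n \<and>
      set ws \<subseteq> S \<union> (\<lambda>s. inv\<^bsub>G\<^esub> s) ` S \<and>
      foldr (\<lambda>x y. x \<otimes>\<^bsub>G\<^esub> y) ws \<one>\<^bsub>G\<^esub> = inv\<^bsub>G\<^esub> g \<otimes>\<^bsub>G\<^esub> h)"

definition gromov_prod :: "('a \<Rightarrow> 'a \<Rightarrow> real) \<Rightarrow> 'a \<Rightarrow> 'a \<Rightarrow> 'a \<Rightarrow> real" where
  "gromov_prod d w x y = (d x w + d y w - d x y) / 2"

definition gromov_hyperbolic_on :: "'a set \<Rightarrow> ('a \<Rightarrow> 'a \<Rightarrow> real) \<Rightarrow> bool" where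
  "gromov_hyperbolic_on V d \<longleftrightarrow> (\<exists>\<delta>\<ge>0. \<forall>x\<in>V. \<forall>y\<in>V. \<forall>z\<in>V. \<forall>w\<in>V.
      gromov_prod d w x z \<ge> min (gromov_prod d w x y) (gromov_prod d w y z) - \<delta>)"

definition weakly_rel_hyperbolic :: "('a, 'b) monoid_scheme \<Rightarrow> 'a set list \<Rightarrow> bool" where
  "weakly_rel_hyperbolic G Hs \<longleftrightarrow> (\<forall>H\<in>set Hs. subgroup H G) \<and>
     (\<exists>S0. finite S0 \<and> S0 \<subseteq> carrier G \<and>
        generate G (S0 \<union> \<Union>(set Hs)) = carrier G \<and>
        gromov_hyperbolic_on (carrier G)
          (\<lambda>g h. real (word_dist G (S0 \<union> \<Union>(set Hs)) g h)))"

definition retract :: "'a set \<Rightarrow> ('a, 'b) monoid_scheme \<Rightarrow> bool" where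
  "retract R G \<longleftrightarrow> subgroup R G \<and>
     (\<exists>r \<in> hom G (G\<lparr>carrier := R\<rparr>). \<forall>x\<in>R. r x = x)"

end

theory Submission
  imports Defs
begin


definition geod :: "'a set \<Rightarrow> ('a \<Rightarrow> 'a \<Rightarrow> nat) \<Rightarrow> (nat \<Rightarrow> 'a) \<Rightarrow> 'a \<Rightarrow> 'a \<Rightarrow> bool" where
  "geod V d g x y \<longleftrightarrow> g 0 = x \<and> g (d x y) = y \<and> (\<forall>i\<le>d x y. g i \<in> V) \<and>
     (\<forall>i j. i \<le> j \<longrightarrow> j \<le> d x y \<longrightarrow> d (g i) (g j) = j - i)"

locale gm =
  fixes V :: "'a set" and d :: "'a \<Rightarrow> 'a \<Rightarrow> nat"
  assumes drefl: "x \<in> V \<Longrightarrow> d x x = 0"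
    and dsym: "x \<in> V \<Longrightarrow> y \<in> V \<Longrightarrow> d x y = d y x"
    and dtri: "x \<in> V \<Longrightarrow> y \<in> V \<Longrightarrow> z \<in> V \<Longrightarrow> d x z \<le> d x y + d y z"
    and exgeod: "x \<in> V \<Longrightarrow> y \<in> V \<Longrightarrow> \<exists>g. geod V d g x y"
begin

definition Gp :: "'a \<Rightarrow> 'a \<Rightarrow> 'a \<Rightarrow> int" where
  "Gp a b p = int (d a p) + int (d b p) - int (d a b)"

definition hyp4 :: "nat \<Rightarrow> bool" where
  "hyp4 K \<longleftrightarrow> (\<forall>x\<in>V. \<forall>y\<in>V. \<forall>z\<in>V. \<forall>w\<in>V. Gp x z w \<ge> min (Gp x y w) (Gp y z w) - int K)"

definition slim :: "nat \<Rightarrow> bool" where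
  "slim D \<longleftrightarrow> (\<forall>a\<in>V. \<forall>b\<in>V. \<forall>c\<in>V. \<forall>\<alpha> \<beta> \<gamma>. geod V d \<alpha> a b \<longrightarrow> geod V d \<beta> a c \<longrightarrow> geod V d \<gamma> c b \<longrightarrow>
     (\<forall>i\<le>d a b. (\<exists>j\<le>d a c. d (\<alpha> i) (\<beta> j) \<le> D) \<or> (\<exists>j\<le>d c b. d (\<alpha> i) (\<gamma> j) \<le> D)))"

lemma geod_in: "geod V d g x y \<Longrightarrow> i \<le> d x y \<Longrightarrow> g i \<in> V"
  by (simp add: geod_def)

lemma geod_ends: "geod V d g x y \<Longrightarrow> g 0 = x" "geod V d g x y \<Longrightarrow> g (d x y) = y"
  by (simp_all add: geod_def)

lemma geod_d: "geod V d g x y \<Longrightarrow> i \<le> j \<Longrightarrow> j \<le> d x y \<Longrightarrow> d (g i) (g j) = j - i"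
  by (simp add: geod_def)

lemma geod_xV: "geod V d g x y \<Longrightarrow> x \<in> V"
  by (metis geod_def le0)
lemma geod_yV: "geod V d g x y \<Longrightarrow> y \<in> V"
  by (metis geod_def order_refl)

lemma geod_start: "geod V d g x y \<Longrightarrow> i \<le> d x y \<Longrightarrow> d x (g i) = i"
  using geod_d[of g x y 0 i] by (simp add: geod_def)
lemma geod_start': "geod V d g x y \<Longrightarrow> i \<le> d x y \<Longrightarrow> d (g i) x = i"
  using geod_start dsym geod_in geod_xV by metis
lemma geod_end: "geod V d g x y \<Longrightarrow> i \<le> d x y \<Longrightarrow> d (g i) y = d x y - i"
  using geod_d[of g x y i "d x y"] by (simp add: geod_def)
lemma geod_end': "geod V d g x y \<Longrightarrow> i \<le> d x y \<Longrightarrow> d y (g i) = d x y - i"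
  using geod_end dsym geod_in geod_yV by metis

lemma geod_sub:
  assumes "geod V d g x y" "s \<le> t" "t \<le> d x y"
  shows "geod V d (\<lambda>i. g (s + i)) (g s) (g t)"
  using assms unfolding geod_def by auto

lemma L1a:
  assumes h: "hyp4 K" and g: "geod V d \<beta> x z" and p: "p \<in> V" and G: "Gp x z p \<le> int K"
  shows "\<exists>j\<le>d x z. d p (\<beta> j) \<le> 2*K+1"
proof -
  have xV: "x \<in> V" and zV: "z \<in> V" using g geod_xV geod_yV by auto
  define n where "n = d x z"
  define c where "c = int (d p z) - int (d x p)"
  have t1: "d x p \<le> d x z + d z p" "d p z \<le> d p x + d x z" using dtri xV zV p by auto
  have s1: "d z p = d p z" "d p x = d x p" using dsym xV zV p by auto
  define j where "j = nat ((int n - c) div 2)"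
  have jn: "j \<le> n" "int j * 2 = int n - c \<or> int j * 2 = int n - c - 1"
    using t1 s1 unfolding j_def n_def c_def by auto
  define q where "q = \<beta> j"
  have qV: "q \<in> V" using geod_in g jn n_def q_def by auto
  have dq: "d x q = j" "d q z = n - j" using geod_start[OF g] geod_end[OF g] jn n_def q_def by auto
  have s2: "d q x = d x q" "d z q = d q z" "d p q = d q p" using dsym xV zV qV p by auto
  have "Gp x z q \<ge> min (Gp x p q) (Gp p z q) - int K" using h xV zV p qV unfolding hyp4_def by blast
  then have "min (Gp x p q) (Gp p z q) \<le> int K"
    using dq s2 jn unfolding Gp_def n_def by auto
  moreover have "Gp x p q \<ge> 0" "Gp p z q \<ge> 0" unfolding Gp_def using dtri[OF xV qV p] dtri[OF p qV zV] s2 by auto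
  ultimately have "2 * int (d p q) \<le> 3 * int K + 1"
    using G dq s2 s1 jn unfolding Gp_def c_def n_def by auto
  then have "d p q \<le> 2*K+1" by linarith
  then show ?thesis using jn n_def q_def by auto
qed

lemma L1:
  assumes h: "hyp4 K" shows "slim (2*K+1)"
  unfolding slim_def
proof (intro ballI allI impI)
  fix a b c \<alpha> \<beta> \<gamma> i
  assume V: "a \<in> V" "b \<in> V" "c \<in> V" and ga: "geod V d \<alpha> a b" and gb: "geod V d \<beta> a c"
    and gc: "geod V d \<gamma> c b" and i: "i \<le> d a b"
  define p where "p = \<alpha> i"
  have pV: "p \<in> V" using geod_in ga i p_def by auto
  have "Gp a b p = 0" using geod_start[OF ga i] geod_end'[OF ga i] i p_def unfolding Gp_def by auto
  moreover have "Gp a b p \<ge> min (Gp a c p) (Gp c b p) - int K" using h V pV unfolding hyp4_def by blast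
  ultimately have "Gp a c p \<le> int K \<or> Gp c b p \<le> int K" by linarith
  then show "(\<exists>j\<le>d a c. d (\<alpha> i) (\<beta> j) \<le> 2*K+1) \<or> (\<exists>j\<le>d c b. d (\<alpha> i) (\<gamma> j) \<le> 2*K+1)"
    using L1a[OF h gb pV] L1a[OF h gc pV] p_def by blast
qed


lemma L2a:
  assumes g: "geod V d g a b" and t: "t \<le> d a b" and w: "w \<in> V"
  shows "Gp a b w \<le> 2 * int (d w (g t))"
proof -
  have V: "a \<in> V" "b \<in> V" "g t \<in> V" using g geod_xV geod_yV geod_in t by auto
  have "d a w \<le> d a (g t) + d (g t) w" "d b w \<le> d b (g t) + d (g t) w"
    using dtri V w by auto
  moreover have "d a (g t) = t" "d b (g t) = d a b - t" "d (g t) w = d w (g t)"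
    using geod_start[OF g t] geod_end'[OF g t] dsym V w by auto
  ultimately show ?thesis unfolding Gp_def using t by auto
qed

lemma L2b:
  assumes s: "slim D" and g: "geod V d \<gamma> x z" and w: "w \<in> V"
  shows "\<exists>t\<le>d x z. 2 * int (d w (\<gamma> t)) \<le> Gp x z w + 4 * (int D + 1)"
proof -
  have xV: "x \<in> V" and zV: "z \<in> V" using g geod_xV geod_yV by auto
  obtain \<beta> where gb: "geod V d \<beta> x w" using exgeod xV w by blast
  obtain \<gamma>' where gc: "geod V d \<gamma>' w z" using exgeod zV w by blast
  have sl: "\<And>i. i \<le> d x z \<Longrightarrow> (\<exists>j\<le>d x w. d (\<gamma> i) (\<beta> j) \<le> D) \<or> (\<exists>j\<le>d w z. d (\<gamma> i) (\<gamma>' j) \<le> D)"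
    using s xV zV w g gb gc unfolding slim_def by blast
  define A where "A = {t. t \<le> d x z \<and> (\<exists>j\<le>d x w. d (\<gamma> t) (\<beta> j) \<le> D)}"
  have fin: "finite A" unfolding A_def by auto
  have "0 \<in> A" unfolding A_def using geod_ends[OF g] geod_ends[OF gb] drefl xV
    by (intro CollectI conjI exI[of _ 0]) auto
  define t where "t = Max A"
  have tA: "t \<in> A" using fin \<open>0 \<in> A\<close> t_def Max_in by blast
  have tmax: "\<And>u. u \<in> A \<Longrightarrow> u \<le> t" using fin t_def by simp
  obtain j1 where j1: "j1 \<le> d x w" "d (\<gamma> t) (\<beta> j1) \<le> D" and tle: "t \<le> d x z" using tA A_def by blast
  have "\<exists>j2\<le>d w z. d (\<gamma> t) (\<gamma>' j2) \<le> D + 1"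
  proof (cases "t = d x z")
    case True
    then show ?thesis using geod_ends[OF g] geod_ends[OF gc] drefl zV by (intro exI[of _ "d w z"]) auto
  next
    case False
    then have t1: "Suc t \<le> d x z" using tle by auto
    have "Suc t \<notin> A" using tmax by fastforce
    then obtain j2 where j2: "j2 \<le> d w z" "d (\<gamma> (Suc t)) (\<gamma>' j2) \<le> D" using sl[OF t1] A_def t1 by blast
    have "d (\<gamma> t) (\<gamma>' j2) \<le> d (\<gamma> t) (\<gamma> (Suc t)) + d (\<gamma> (Suc t)) (\<gamma>' j2)"
      using dtri geod_in g gc t1 j2 by (meson Suc_leD)
    moreover have "d (\<gamma> t) (\<gamma> (Suc t)) = 1" using geod_d[OF g _ t1, of t] by simp
    ultimately show ?thesis using j2 by (intro exI[of _ j2]) auto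
  qed
  then obtain j2 where j2: "j2 \<le> d w z" "d (\<gamma> t) (\<gamma>' j2) \<le> D + 1" by blast
  define q u v where "q = \<gamma> t" "u = \<beta> j1" "v = \<gamma>' j2"
  have V: "q \<in> V" "u \<in> V" "v \<in> V" using geod_in g gb gc tle j1 j2 q_u_v_def by auto
  have e1: "d x u = j1" "d u w = d x w - j1" using geod_start[OF gb j1(1)] geod_end[OF gb j1(1)] q_u_v_def by auto
  have e2: "d w v = j2" "d v z = d w z - j2" using geod_start[OF gc j2(1)] geod_end[OF gc j2(1)] q_u_v_def by auto
  have e3: "d x q = t" "d q z = d x z - t" using geod_start[OF g tle] geod_end[OF g tle] q_u_v_def by auto
  have tr: "d x q \<le> d x u + d u q" "d q w \<le> d q u + d u w" "d z q \<le> d z v + d v q" "d q w \<le> d q v + d v w"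
    using dtri V xV zV w by auto
  have sy: "d u q = d q u" "d v q = d q v" "d v w = d w v" "d z v = d v z" "d z q = d q z" "d w q = d q w"
    "d z w = d w z"
    using dsym V xV zV w by auto
  have "2 * int (d w q) \<le> Gp x z w + 4 * (int D + 1)"
    using e1 e2 e3 tr sy j1 j2 tle q_u_v_def unfolding Gp_def by auto
  then show ?thesis using tle q_u_v_def by auto
qed

lemma L2:
  assumes s: "slim D" shows "hyp4 (6*D+4)"
  unfolding hyp4_def
proof (intro ballI)
  fix x y z w assume V: "x \<in> V" "y \<in> V" "z \<in> V" "w \<in> V"
  obtain \<gamma> where g: "geod V d \<gamma> x z" using exgeod V by blast
  obtain \<alpha> where ga: "geod V d \<alpha> x y" using exgeod V by blast
  obtain \<beta> where gb: "geod V d \<beta> y z" using exgeod V by blast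
  obtain t where t: "t \<le> d x z" "2 * int (d w (\<gamma> t)) \<le> Gp x z w + 4 * (int D + 1)"
    using L2b[OF s g V(4)] by blast
  have qV: "\<gamma> t \<in> V" using geod_in g t by auto
  have "(\<exists>j\<le>d x y. d (\<gamma> t) (\<alpha> j) \<le> D) \<or> (\<exists>j\<le>d y z. d (\<gamma> t) (\<beta> j) \<le> D)"
    using s V g ga gb t unfolding slim_def by blast
  then show "min (Gp x y w) (Gp y z w) - int (6*D+4) \<le> Gp x z w"
  proof
    assume "\<exists>j\<le>d x y. d (\<gamma> t) (\<alpha> j) \<le> D"
    then obtain j where j: "j \<le> d x y" "d (\<gamma> t) (\<alpha> j) \<le> D" by blast
    have "d w (\<alpha> j) \<le> d w (\<gamma> t) + d (\<gamma> t) (\<alpha> j)" using dtri V qV geod_in ga j by auto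
    then have "int (d w (\<alpha> j)) \<le> int (d w (\<gamma> t)) + int D" using j by linarith
    moreover have "Gp x y w \<le> 2 * int (d w (\<alpha> j))" using L2a[OF ga j(1) V(4)] .
    moreover have "int (6*D+4) = 6 * int D + 4" by simp
    ultimately show ?thesis using t j min.cobounded1[of "Gp x y w" "Gp y z w"] by (smt (verit))
  next
    assume "\<exists>j\<le>d y z. d (\<gamma> t) (\<beta> j) \<le> D"
    then obtain j where j: "j \<le> d y z" "d (\<gamma> t) (\<beta> j) \<le> D" by blast
    have "d w (\<beta> j) \<le> d w (\<gamma> t) + d (\<gamma> t) (\<beta> j)" using dtri V qV geod_in gb j by auto
    then have "int (d w (\<beta> j)) \<le> int (d w (\<gamma> t)) + int D" using j by linarith
    moreover have "Gp y z w \<le> 2 * int (d w (\<beta> j))" using L2a[OF gb j(1) V(4)] .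
    moreover have "int (6*D+4) = 6 * int D + 4" by simp
    ultimately show ?thesis using t j min.cobounded2[of "Gp x y w" "Gp y z w"] by (smt (verit))
  qed
qed


lemma L3_base:
  assumes st: "\<forall>i<L. d (p i) (p (Suc i)) \<le> C" and pV: "\<forall>i\<le>L. p i \<in> V"
    and g: "geod V d \<sigma> (p 0) (p L)" and L: "L \<le> 1" and t: "t \<le> d (p 0) (p L)"
  shows "\<exists>i\<le>L. d (\<sigma> t) (p i) \<le> C"
proof -
  have "d (\<sigma> t) (p 0) = t" using geod_start'[OF g t] .
  moreover have "d (p 0) (p L) \<le> C"
  proof (cases "L = 0")
    case True then show ?thesis using drefl pV by auto
  next
    case False then have "L = 1" using L by auto
    then show ?thesis using st by auto
  qed
  ultimately show ?thesis using t by (intro exI[of _ 0]) auto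
qed

lemma L3:
  assumes s: "slim D"
  shows "\<forall>i<L. d (p i) (p (Suc i)) \<le> C \<Longrightarrow> \<forall>i\<le>L. p i \<in> V \<Longrightarrow>
    geod V d \<sigma> (p 0) (p L) \<Longrightarrow> L \<le> 2^k \<Longrightarrow> t \<le> d (p 0) (p L) \<Longrightarrow>
    \<exists>i\<le>L. d (\<sigma> t) (p i) \<le> D*k + C"
proof (induction k arbitrary: p L \<sigma> t)
  case 0
  then show ?case using L3_base[where L=L and p=p and C=C and \<sigma>=\<sigma> and t=t] by auto
next
  case (Suc k)
  show ?case
  proof (cases "L \<le> 1")
    case True
    then show ?thesis using L3_base[where L=L and p=p and C=C and \<sigma>=\<sigma> and t=t] Suc.prems by fastforce
  next
    case False
    define m where "m = L div 2"
    have m: "m \<le> L" "m \<le> 2^k" "L - m \<le> 2^k" using Suc.prems(4) False unfolding m_def by auto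
    have V: "p 0 \<in> V" "p L \<in> V" "p m \<in> V" using Suc.prems(2) m by auto
    obtain \<beta> where gb: "geod V d \<beta> (p 0) (p m)" using exgeod V by blast
    obtain \<gamma> where gc: "geod V d \<gamma> (p m) (p L)" using exgeod V by blast
    have "(\<exists>j\<le>d (p 0) (p m). d (\<sigma> t) (\<beta> j) \<le> D) \<or> (\<exists>j\<le>d (p m) (p L). d (\<sigma> t) (\<gamma> j) \<le> D)"
      using s V Suc.prems(3,5) gb gc unfolding slim_def by blast
    then show ?thesis
    proof
      assume "\<exists>j\<le>d (p 0) (p m). d (\<sigma> t) (\<beta> j) \<le> D"
      then obtain j where j: "j \<le> d (p 0) (p m)" "d (\<sigma> t) (\<beta> j) \<le> D" by blast
      obtain i where i: "i \<le> m" "d (\<beta> j) (p i) \<le> D*k + C"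
        using Suc.IH[where p=p and L=m and \<sigma>=\<beta> and t=j] Suc.prems m gb j by auto
      have "d (\<sigma> t) (p i) \<le> d (\<sigma> t) (\<beta> j) + d (\<beta> j) (p i)"
        using dtri geod_in Suc.prems(3,5) gb j i Suc.prems(2) m by (meson order_trans)
      then show ?thesis using i j m by (intro exI[of _ i]) auto
    next
      assume "\<exists>j\<le>d (p m) (p L). d (\<sigma> t) (\<gamma> j) \<le> D"
      then obtain j where j: "j \<le> d (p m) (p L)" "d (\<sigma> t) (\<gamma> j) \<le> D" by blast
      have gc': "geod V d \<gamma> ((\<lambda>i. p (m + i)) 0) ((\<lambda>i. p (m + i)) (L - m))" using gc m by simp
      obtain i where i: "i \<le> L - m" "d (\<gamma> j) (p (m + i)) \<le> D*k + C"
        using Suc.IH[where p="\<lambda>i. p (m + i)" and L="L - m" and \<sigma>=\<gamma> and t=j, OF _ _ gc'] Suc.prems m j by auto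
      have "d (\<sigma> t) (p (m+i)) \<le> d (\<sigma> t) (\<gamma> j) + d (\<gamma> j) (p (m+i))"
        using dtri geod_in Suc.prems(3,5) gc j i Suc.prems(2) m by simp
      then show ?thesis using i j m by (intro exI[of _ "m+i"]) auto
    qed
  qed
qed


definition qpath :: "nat \<Rightarrow> (nat \<Rightarrow> 'a) \<Rightarrow> nat \<Rightarrow> bool" where
  "qpath C c n \<longleftrightarrow> (\<forall>i\<le>n. c i \<in> V) \<and> (\<forall>i<n. d (c i) (c (Suc i)) \<le> C) \<and>
     (\<forall>i j. i \<le> j \<longrightarrow> j \<le> n \<longrightarrow> j - i \<le> d (c i) (c j))"

lemma qpath_lip: assumes q: "qpath C c n" shows "i \<le> j \<Longrightarrow> j \<le> n \<Longrightarrow> d (c i) (c j) \<le> C * (j - i)"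
proof (induction j)
  case 0 then show ?case using q drefl unfolding qpath_def by auto
next
  case (Suc j)
  show ?case
  proof (cases "i = Suc j")
    case True then show ?thesis using q drefl Suc.prems unfolding qpath_def by auto
  next
    case False
    then have ij: "i \<le> j" using Suc.prems by auto
    have V: "c i \<in> V" "c j \<in> V" "c (Suc j) \<in> V" using q Suc.prems unfolding qpath_def by auto
    have "d (c i) (c (Suc j)) \<le> d (c i) (c j) + d (c j) (c (Suc j))" using dtri V by auto
    also have "\<dots> \<le> C * (j - i) + C"
    proof -
      have "d (c j) (c (Suc j)) \<le> C" using Suc.prems q unfolding qpath_def by auto
      then show ?thesis using Suc.IH[OF ij] Suc.prems by linarith
    qed
    also have "\<dots> = C * (Suc j - i)" using ij by (simp add: Suc_diff_le algebra_simps)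
    finally show ?thesis .
  qed
qed

lemma qpath_low: "qpath C c n \<Longrightarrow> i \<le> n \<Longrightarrow> j \<le> n \<Longrightarrow> (j - i) + (i - j) \<le> d (c i) (c j)"
proof -
  assume q: "qpath C c n" and i: "i \<le> n" and j: "j \<le> n"
  show ?thesis
  proof (cases "i \<le> j")
    case True then show ?thesis using q j unfolding qpath_def by auto
  next
    case False
    then have "i - j \<le> d (c j) (c i)" using q i unfolding qpath_def by auto
    moreover have "d (c j) (c i) = d (c i) (c j)" using dsym q i j unfolding qpath_def by auto
    ultimately show ?thesis using False by auto
  qed
qed

lemma L3':
  assumes s: "slim D" and q: "qpath C c n" and i: "i1 \<le> n" "i2 \<le> n"
    and g: "geod V d g (c i1) (c i2)" and t: "t \<le> d (c i1) (c i2)" and k: "(i2 - i1) + (i1 - i2) \<le> 2^k"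
  shows "\<exists>j\<le>n. d (g t) (c j) \<le> D*k + C"
proof (cases "i1 \<le> i2")
  case True
  have g': "geod V d g ((\<lambda>j. c (i1 + j)) 0) ((\<lambda>j. c (i1 + j)) (i2 - i1))" using g True by simp
  obtain j where "j \<le> i2 - i1" "d (g t) (c (i1 + j)) \<le> D*k + C"
    using L3[OF s, where p="\<lambda>j. c (i1 + j)" and L="i2 - i1" and \<sigma>=g and t=t and C=C and k=k, OF _ _ g'] 
      q i t k True unfolding qpath_def by auto
  then show ?thesis using True i by (intro exI[of _ "i1 + j"]) auto
next
  case False
  have g': "geod V d g ((\<lambda>j. c (i1 - j)) 0) ((\<lambda>j. c (i1 - j)) (i1 - i2))" using g False by simp
  have st: "\<forall>j<i1 - i2. d (c (i1 - j)) (c (i1 - Suc j)) \<le> C"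
  proof (intro allI impI)
    fix j assume j: "j < i1 - i2"
    then have e: "i1 - j = Suc (i1 - Suc j)" by auto
    have "d (c (i1 - Suc j)) (c (Suc (i1 - Suc j))) \<le> C" using q j i unfolding qpath_def by auto
    moreover have "c (i1 - Suc j) \<in> V" "c (i1 - j) \<in> V" using q i unfolding qpath_def by auto
    ultimately show "d (c (i1 - j)) (c (i1 - Suc j)) \<le> C" using dsym e by metis
  qed
  obtain j where "j \<le> i1 - i2" "d (g t) (c (i1 - j)) \<le> D*k + C"
    using L3[OF s, where p="\<lambda>j. c (i1 - j)" and L="i1 - i2" and \<sigma>=g and t=t and C=C and k=k, OF _ _ g'] 
      st q i t k False unfolding qpath_def by auto
  then show ?thesis using False i by (intro exI[of _ "i1 - j"]) auto
qed

end

lemma pow_bound: "\<exists>K0::nat. \<forall>k. 2^k \<le> a + b*k \<longrightarrow> k \<le> K0"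
proof -
  have sq: "k*k < 2^k" if "k \<ge> 5" for k :: nat
    using that
  proof (induction k rule: dec_induct)
    case base then show ?case by simp
  next
    case (step m)
    have "Suc m * Suc m = m*m + 2*m + 1" by simp
    also have "\<dots> < m*m + m*m"
    proof -
      have "5 * m \<le> m * m" using step.hyps by simp
      then show ?thesis using step.hyps by linarith
    qed
    also have "\<dots> < 2^m + 2^m" using step.IH by simp
    finally show ?case by simp
  qed
  show ?thesis
  proof (intro exI[of _ "a + b + 5"] allI impI)
    fix k :: nat assume h: "2^k \<le> a + b*k"
    show "k \<le> a + b + 5"
    proof (rule ccontr)
      assume "\<not> k \<le> a + b + 5"
      then have k: "k \<ge> a + b + 1" "k \<ge> 5" by auto
      have "a \<le> a * k" using k by simp
      then have "a + b*k < (a+b+1)*k" using k by (simp add: algebra_simps)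
      also have "\<dots> \<le> k*k" using k mult_le_mono1[OF k(1), of k] by simp
      also have "\<dots> < 2^k" using sq k by simp
      finally show False using h by simp
    qed
  qed
qed


context gm begin

lemma morse1:
  assumes s: "slim D" and q: "qpath C c n" and g: "geod V d \<sigma> (c 0) (c n)"
    and MB: "\<forall>x k. x \<le> 2*D + C + D*k \<longrightarrow> 2^k \<le> max 1 (12*x) \<longrightarrow> x \<le> M"
  shows "\<forall>t\<le>d (c 0) (c n). \<exists>i\<le>n. d (\<sigma> t) (c i) \<le> M"
proof -
  define N where "N = d (c 0) (c n)"
  have cV: "\<And>i. i \<le> n \<Longrightarrow> c i \<in> V" using q unfolding qpath_def by auto
  have sV: "\<And>t. t \<le> N \<Longrightarrow> \<sigma> t \<in> V" using geod_in g N_def by auto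
  define md where "md t = Min ((\<lambda>i. d (\<sigma> t) (c i)) ` {..n})" for t
  have md_le: "\<And>t i. i \<le> n \<Longrightarrow> md t \<le> d (\<sigma> t) (c i)" unfolding md_def by simp
  have md_ex: "\<And>t. \<exists>i\<le>n. d (\<sigma> t) (c i) = md t"
  proof -
    fix t
    have "md t \<in> (\<lambda>i. d (\<sigma> t) (c i)) ` {..n}" unfolding md_def by (intro Min_in) auto
    then show "\<exists>i\<le>n. d (\<sigma> t) (c i) = md t" by auto
  qed
  define D0 where "D0 = Max (md ` {..N})"
  have "D0 \<in> md ` {..N}" unfolding D0_def by (intro Max_in) auto
  then obtain t0 where t0: "t0 \<le> N" "md t0 = D0" by auto
  have near: "\<And>t. t \<le> N \<Longrightarrow> \<exists>i\<le>n. d (\<sigma> t) (c i) \<le> D0"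
  proof -
    fix t assume "t \<le> N"
    then have "md t \<le> D0" unfolding D0_def by simp
    then show "\<exists>i\<le>n. d (\<sigma> t) (c i) \<le> D0" using md_ex[of t] by force
  qed
  have far: "\<And>i. i \<le> n \<Longrightarrow> D0 \<le> d (\<sigma> t0) (c i)" using md_le t0 by metis
  have s0: "\<sigma> 0 = c 0" "\<sigma> N = c n" using geod_ends[OF g] N_def by auto
  have sd: "\<And>a b. a \<le> b \<Longrightarrow> b \<le> N \<Longrightarrow> d (\<sigma> a) (\<sigma> b) = b - a" using geod_d[OF g] N_def by auto
  have sd': "\<And>a b. a \<le> b \<Longrightarrow> b \<le> N \<Longrightarrow> d (\<sigma> b) (\<sigma> a) = b - a" using sd dsym sV by (metis le_trans)
  have ex6: "\<exists>k. 6*D0 \<le> 2^k" by (intro exI[of _ "6*D0"]) (simp add: less_imp_le)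
  define k where "k = (LEAST k. 6*D0 \<le> 2^k)"
  have k1: "6*D0 \<le> 2^k" unfolding k_def by (rule LeastI_ex[OF ex6])
  have k2: "2^k \<le> max 1 (12*D0)"
  proof (cases k)
    case 0 then show ?thesis by simp
  next
    case (Suc k')
    then have "\<not> 6*D0 \<le> 2^k'" using not_less_Least[of k' "\<lambda>k. 6*D0 \<le> 2^k"] k_def by auto
    then show ?thesis using Suc by simp
  qed
  have main: "D0 \<le> 2*D + C + D*k"
  proof -
    define t1 where "t1 = t0 - 2*D0"
    define t2 where "t2 = min (t0 + 2*D0) N"
    have tt: "t1 \<le> t0" "t0 \<le> t2" "t2 \<le> N" using t0 unfolding t1_def t2_def by auto
    obtain i1 where i1: "i1 \<le> n" "d (\<sigma> t1) (c i1) \<le> D0" "t1 = 0 \<longrightarrow> i1 = 0"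
    proof (cases "t1 = 0")
      case True then show ?thesis using that[of 0] s0 drefl cV by auto
    next
      case False then show ?thesis using that near tt by (meson le_trans)
    qed
    obtain i2 where i2: "i2 \<le> n" "d (\<sigma> t2) (c i2) \<le> D0" "t2 = N \<longrightarrow> i2 = n"
    proof (cases "t2 = N")
      case True then show ?thesis using that[of n] s0 drefl cV by auto
    next
      case False then show ?thesis using that near tt by (meson le_trans)
    qed
    have V: "\<sigma> t0 \<in> V" "\<sigma> t1 \<in> V" "\<sigma> t2 \<in> V" "c i1 \<in> V" "c i2 \<in> V" using sV cV tt i1 i2 by auto
    obtain g1 where g1: "geod V d g1 (\<sigma> t1) (c i1)" using exgeod V by blast
    obtain h where h: "geod V d h (c i1) (\<sigma> t2)" using exgeod V by blast
    obtain e where e: "geod V d e (c i1) (c i2)" using exgeod V by blast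
    obtain g2 where g2: "geod V d g2 (c i2) (\<sigma> t2)" using exgeod V by blast
    have ga: "geod V d (\<lambda>s. \<sigma> (t1 + s)) (\<sigma> t1) (\<sigma> t2)" using geod_sub[OF g, of t1 t2] tt N_def by auto
    have t0a: "t0 - t1 \<le> d (\<sigma> t1) (\<sigma> t2)" "\<sigma> (t1 + (t0 - t1)) = \<sigma> t0" using sd tt by auto
    have tri1: "(\<exists>j\<le>d (\<sigma> t1) (c i1). d (\<sigma> t0) (g1 j) \<le> D) \<or> (\<exists>j\<le>d (c i1) (\<sigma> t2). d (\<sigma> t0) (h j) \<le> D)"
      using s V ga g1 h t0a unfolding slim_def by (metis (no_types, lifting))
    show ?thesis
    proof (cases "\<exists>j\<le>d (\<sigma> t1) (c i1). d (\<sigma> t0) (g1 j) \<le> D")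
      case True
      then obtain j where j: "j \<le> d (\<sigma> t1) (c i1)" "d (\<sigma> t0) (g1 j) \<le> D" by blast
      have gV: "g1 j \<in> V" using geod_in[OF g1 j(1)] .
      have "D0 \<le> d (\<sigma> t0) (c i1)" using far i1 by auto
      also have "\<dots> \<le> d (\<sigma> t0) (g1 j) + d (g1 j) (c i1)" using dtri V gV by auto
      finally have A1: "D0 \<le> D + (d (\<sigma> t1) (c i1) - j)" using j geod_end[OF g1 j(1)] by auto
      have "d (\<sigma> t0) (\<sigma> t1) \<le> d (\<sigma> t0) (g1 j) + d (g1 j) (\<sigma> t1)" using dtri V gV by auto
      then have A2: "t0 - t1 \<le> D + j" using j geod_start'[OF g1 j(1)] sd' tt by auto
      show ?thesis
      proof (cases "t1 = 0")
        case True
        then have "d (\<sigma> t1) (c i1) = 0" using i1 s0 drefl cV by auto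
        then show ?thesis using A1 by auto
      next
        case False
        then have "t0 - t1 = 2*D0" unfolding t1_def by auto
        then show ?thesis using A2 j i1 by linarith
      qed
    next
      case False
      then obtain j where j: "j \<le> d (c i1) (\<sigma> t2)" "d (\<sigma> t0) (h j) \<le> D" using tri1 by blast
      have hV: "h j \<in> V" using geod_in[OF h j(1)] .
      have tri2: "(\<exists>j'\<le>d (c i1) (c i2). d (h j) (e j') \<le> D) \<or> (\<exists>j'\<le>d (c i2) (\<sigma> t2). d (h j) (g2 j') \<le> D)"
        using s V h e g2 j unfolding slim_def by blast
      show ?thesis
      proof (cases "\<exists>j'\<le>d (c i2) (\<sigma> t2). d (h j) (g2 j') \<le> D")
        case True
        then obtain j' where j': "j' \<le> d (c i2) (\<sigma> t2)" "d (h j) (g2 j') \<le> D" by blast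
        have gV: "g2 j' \<in> V" using geod_in[OF g2 j'(1)] .
        have B0: "d (\<sigma> t0) (g2 j') \<le> 2*D" using dtri[OF V(1) hV gV] j j' by auto
        have "D0 \<le> d (\<sigma> t0) (c i2)" using far i2 by auto
        also have "\<dots> \<le> d (\<sigma> t0) (g2 j') + d (g2 j') (c i2)" using dtri V gV by auto
        finally have B1: "D0 \<le> 2*D + j'" using B0 geod_start'[OF g2 j'(1)] by auto
        have "d (\<sigma> t0) (\<sigma> t2) \<le> d (\<sigma> t0) (g2 j') + d (g2 j') (\<sigma> t2)" using dtri V gV by auto
        then have B2: "t2 - t0 \<le> 2*D + (d (c i2) (\<sigma> t2) - j')" using B0 geod_end[OF g2 j'(1)] sd tt by auto
        have L2: "d (c i2) (\<sigma> t2) \<le> D0" using i2 dsym V by auto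
        show ?thesis
        proof (cases "t2 = N")
          case True
          then have "d (c i2) (\<sigma> t2) = 0" using i2 s0 drefl cV by auto
          then show ?thesis using B1 j' by auto
        next
          case False
          then have "t2 - t0 = 2*D0" unfolding t2_def by auto
          then show ?thesis using B2 L2 j' by linarith
        qed
      next
        case False
        then obtain j' where j': "j' \<le> d (c i1) (c i2)" "d (h j) (e j') \<le> D" using tri2 by blast
        have eV: "e j' \<in> V" using geod_in[OF e j'(1)] .
        have B0: "d (\<sigma> t0) (e j') \<le> 2*D" using dtri[OF V(1) hV eV] j j' by auto
        have "(i2 - i1) + (i1 - i2) \<le> d (c i1) (c i2)" using qpath_low[OF q i1(1) i2(1)] .
        also have "\<dots> \<le> d (c i1) (\<sigma> t1) + d (\<sigma> t1) (c i2)" using dtri V by auto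
        also have "\<dots> \<le> d (c i1) (\<sigma> t1) + (d (\<sigma> t1) (\<sigma> t2) + d (\<sigma> t2) (c i2))" using dtri V by auto
        also have "\<dots> \<le> 6 * D0"
        proof -
          have "d (c i1) (\<sigma> t1) \<le> D0" using i1 dsym V by auto
          moreover have "d (\<sigma> t1) (\<sigma> t2) = t2 - t1" using sd tt by auto
          moreover have "t2 - t1 \<le> 4 * D0" unfolding t1_def t2_def by auto
          ultimately show ?thesis using i2 by linarith
        qed
        finally have "(i2 - i1) + (i1 - i2) \<le> 2^k" using k1 by linarith
        then obtain m where m: "m \<le> n" "d (e j') (c m) \<le> D*k + C" using L3'[OF s q i1(1) i2(1) e j'(1)] by blast
        have "D0 \<le> d (\<sigma> t0) (c m)" using far m by auto
        also have "\<dots> \<le> d (\<sigma> t0) (e j') + d (e j') (c m)" using dtri V eV cV m by auto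
        finally show ?thesis using B0 m by linarith
      qed
    qed
  qed
  have "D0 \<le> M" using MB main k2 by blast
  then show ?thesis using near N_def by (meson le_trans)
qed

end




context gm begin

lemma morse2:
  assumes q: "qpath C c n" and g: "geod V d \<sigma> (c 0) (c n)"
    and m1: "\<forall>t\<le>d (c 0) (c n). \<exists>i\<le>n. d (\<sigma> t) (c i) \<le> M" and k: "k \<le> n"
  shows "\<exists>t\<le>d (c 0) (c n). d (c k) (\<sigma> t) \<le> C*(2*M+1) + M"
proof -
  define N where "N = d (c 0) (c n)"
  have cV: "\<And>i. i \<le> n \<Longrightarrow> c i \<in> V" using q unfolding qpath_def by auto
  have sV: "\<And>t. t \<le> N \<Longrightarrow> \<sigma> t \<in> V" using geod_in g N_def by auto
  have s0: "\<sigma> 0 = c 0" "\<sigma> N = c n" using geod_ends[OF g] N_def by auto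
  define A where "A = {t. t \<le> N \<and> (\<exists>i\<le>k. d (\<sigma> t) (c i) \<le> M)}"
  have fin: "finite A" unfolding A_def by auto
  have "0 \<in> A" unfolding A_def using s0 drefl cV by (intro CollectI conjI exI[of _ 0]) auto
  define t where "t = Max A"
  have tA: "t \<in> A" using fin \<open>0 \<in> A\<close> t_def Max_in by blast
  have tmax: "\<And>u. u \<in> A \<Longrightarrow> u \<le> t" using fin t_def by simp
  obtain a where a: "a \<le> k" "d (\<sigma> t) (c a) \<le> M" and tN: "t \<le> N" using tA A_def by blast
  have V: "\<sigma> t \<in> V" "c a \<in> V" "c k \<in> V" using sV tN cV a k by auto
  have lipka: "d (c k) (c a) \<le> C * (k - a)"
    using qpath_lip[OF q a(1) k] dsym V by auto
  have "\<exists>b\<ge>k. b \<le> n \<and> d (c a) (c b) \<le> 2*M+1"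
  proof (cases "t = N")
    case True
    have "d (c a) (c n) \<le> M" using a True s0 dsym V cV by auto
    then show ?thesis using k by auto
  next
    case False
    then have t1: "Suc t \<le> N" using tN by auto
    have nA: "Suc t \<notin> A" using tmax by fastforce
    obtain b where b: "b \<le> n" "d (\<sigma> (Suc t)) (c b) \<le> M" using m1 t1 N_def by blast
    have bk: "b > k"
    proof (rule ccontr)
      assume "\<not> k < b"
      then have "Suc t \<in> A" unfolding A_def using t1 b by (auto intro!: exI[of _ b])
      then show False using nA by simp
    qed
    have sV1: "\<sigma> (Suc t) \<in> V" using sV t1 by auto
    have "d (c a) (c b) \<le> d (c a) (\<sigma> t) + d (\<sigma> t) (c b)" using dtri V cV b by auto
    also have "\<dots> \<le> d (c a) (\<sigma> t) + (d (\<sigma> t) (\<sigma> (Suc t)) + d (\<sigma> (Suc t)) (c b))" using dtri V cV b sV1 by auto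
    also have "\<dots> \<le> 2*M+1"
    proof -
      have "d (\<sigma> t) (\<sigma> (Suc t)) = 1" using geod_d[OF g _ t1[unfolded N_def], of t] by simp
      moreover have "d (c a) (\<sigma> t) = d (\<sigma> t) (c a)" using dsym V by auto
      ultimately show ?thesis using a b by linarith
    qed
    finally show ?thesis using bk b by (intro exI[of _ b]) auto
  qed
  then obtain b where b: "k \<le> b" "b \<le> n" "d (c a) (c b) \<le> 2*M+1" by blast
  have "b - a \<le> 2*M+1" using qpath_low[OF q _ b(2), of a] a k b by auto
  then have "k - a \<le> 2*M+1" using b by auto
  then have "C * (k - a) \<le> C*(2*M+1)" by (rule mult_le_mono2)
  moreover have "d (c k) (\<sigma> t) \<le> d (c k) (c a) + d (c a) (\<sigma> t)" using dtri V by auto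
  moreover have "d (c a) (\<sigma> t) = d (\<sigma> t) (c a)" using dsym V by auto
  ultimately have "d (c k) (\<sigma> t) \<le> C*(2*M+1) + M" using lipka a by linarith
  then show ?thesis using tN N_def by auto
qed

end

lemma transfer:
  assumes G1: "gm V1 d1" and G2: "gm V2 d2" and sub: "V1 \<subseteq> V2"
    and low: "\<forall>a\<in>V1. \<forall>b\<in>V1. d1 a b \<le> d2 a b"
    and step: "\<forall>a\<in>V1. \<forall>b\<in>V1. d1 a b = 1 \<longrightarrow> d2 a b \<le> C"
    and sl: "gm.slim V2 d2 D"
  shows "\<exists>D'. gm.slim V1 d1 D'"
proof -
  interpret A: gm V1 d1 by (rule G1)
  interpret B: gm V2 d2 by (rule G2)
  obtain K0 where K0: "\<forall>k. 2^k \<le> (12*(2*D+C)+1) + (12*D)*k \<longrightarrow> k \<le> K0" using pow_bound by blast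
  define M where "M = 2*D + C + D*K0"
  have MB: "\<forall>x k. x \<le> 2*D + C + D*k \<longrightarrow> 2^k \<le> max 1 (12*x) \<longrightarrow> x \<le> M"
  proof (intro allI impI)
    fix x k :: nat assume h1: "x \<le> 2*D + C + D*k" and h2: "2^k \<le> max 1 (12*x)"
    have a1: "max 1 (12*x) \<le> 12*x + 1" by simp
    have "12*x \<le> 12*(2*D + C + D*k)" using h1 by (rule mult_le_mono2)
    then have a2: "12*x \<le> 12*(2*D+C) + (12*D)*k" by (simp add: algebra_simps)
    have "(2::nat)^k \<le> (12*(2*D+C)+1) + (12*D)*k" using h2 a1 a2 by linarith
    then have "k \<le> K0" using K0 by blast
    then have "D*k \<le> D*K0" by (rule mult_le_mono2)
    then show "x \<le> M" using h1 unfolding M_def by linarith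
  qed
  have qp: "B.qpath C \<alpha> (d1 a b)" if g: "geod V1 d1 \<alpha> a b" for \<alpha> a b
    unfolding B.qpath_def
  proof (intro conjI allI impI)
    fix i assume "i \<le> d1 a b" then show "\<alpha> i \<in> V2" using A.geod_in g sub by auto
  next
    fix i assume i: "i < d1 a b"
    have "d1 (\<alpha> i) (\<alpha> (Suc i)) = 1" using A.geod_d[OF g, of i "Suc i"] i by auto
    then show "d2 (\<alpha> i) (\<alpha> (Suc i)) \<le> C" using step A.geod_in[OF g] i by auto
  next
    fix i j assume "i \<le> j" "j \<le> d1 a b"
    then have "d1 (\<alpha> i) (\<alpha> j) = j - i" "\<alpha> i \<in> V1" "\<alpha> j \<in> V1" using A.geod_d[OF g] A.geod_in[OF g] by auto
    then show "j - i \<le> d2 (\<alpha> i) (\<alpha> j)" using low by metis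
  qed
  define D' where "D' = M + (C*(2*M+1) + M) + D"
  have "A.slim D'"
    unfolding A.slim_def
  proof (intro ballI allI impI)
    fix a b c \<alpha> \<beta> \<gamma> i
    assume V: "a \<in> V1" "b \<in> V1" "c \<in> V1" and ga: "geod V1 d1 \<alpha> a b" and gb: "geod V1 d1 \<beta> a c"
      and gc: "geod V1 d1 \<gamma> c b" and i: "i \<le> d1 a b"
    have V2: "a \<in> V2" "b \<in> V2" "c \<in> V2" using V sub by auto
    obtain \<alpha>' where ga': "geod V2 d2 \<alpha>' a b" using B.exgeod V2 by blast
    obtain \<beta>' where gb': "geod V2 d2 \<beta>' a c" using B.exgeod V2 by blast
    obtain \<gamma>' where gc': "geod V2 d2 \<gamma>' c b" using B.exgeod V2 by blast
    have e: "\<alpha> 0 = a" "\<alpha> (d1 a b) = b" "\<beta> 0 = a" "\<beta> (d1 a c) = c" "\<gamma> 0 = c" "\<gamma> (d1 c b) = b"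
      using A.geod_ends ga gb gc by auto
    have ga'': "geod V2 d2 \<alpha>' (\<alpha> 0) (\<alpha> (d1 a b))" using ga' e by simp
    have gb'': "geod V2 d2 \<beta>' (\<beta> 0) (\<beta> (d1 a c))" using gb' e by simp
    have gc'': "geod V2 d2 \<gamma>' (\<gamma> 0) (\<gamma> (d1 c b))" using gc' e by simp
    have m1a: "\<forall>t\<le>d2 a b. \<exists>i\<le>d1 a b. d2 (\<alpha>' t) (\<alpha> i) \<le> M"
      using B.morse1[OF sl qp[OF ga] ga'' MB] e by simp
    have m1b: "\<forall>t\<le>d2 a c. \<exists>i\<le>d1 a c. d2 (\<beta>' t) (\<beta> i) \<le> M"
      using B.morse1[OF sl qp[OF gb] gb'' MB] e by simp
    have m1c: "\<forall>t\<le>d2 c b. \<exists>i\<le>d1 c b. d2 (\<gamma>' t) (\<gamma> i) \<le> M"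
      using B.morse1[OF sl qp[OF gc] gc'' MB] e by simp
    obtain t where t: "t \<le> d2 a b" "d2 (\<alpha> i) (\<alpha>' t) \<le> C*(2*M+1) + M"
      using B.morse2[OF qp[OF ga] ga'' _ i] m1a e by auto
    have pV: "\<alpha> i \<in> V1" "\<alpha>' t \<in> V2" using A.geod_in[OF ga i] B.geod_in[OF ga' t(1)] by auto
    have "(\<exists>j\<le>d2 a c. d2 (\<alpha>' t) (\<beta>' j) \<le> D) \<or> (\<exists>j\<le>d2 c b. d2 (\<alpha>' t) (\<gamma>' j) \<le> D)"
      using sl V2 ga' gb' gc' t(1) unfolding B.slim_def by blast
    then show "(\<exists>j\<le>d1 a c. d1 (\<alpha> i) (\<beta> j) \<le> D') \<or> (\<exists>j\<le>d1 c b. d1 (\<alpha> i) (\<gamma> j) \<le> D')"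
    proof
      assume "\<exists>j\<le>d2 a c. d2 (\<alpha>' t) (\<beta>' j) \<le> D"
      then obtain j where j: "j \<le> d2 a c" "d2 (\<alpha>' t) (\<beta>' j) \<le> D" by blast
      obtain s where s: "s \<le> d1 a c" "d2 (\<beta>' j) (\<beta> s) \<le> M" using m1b j by blast
      have qV: "\<beta>' j \<in> V2" "\<beta> s \<in> V1" using B.geod_in[OF gb' j(1)] A.geod_in[OF gb s(1)] by auto
      have "d2 (\<alpha> i) (\<beta> s) \<le> d2 (\<alpha> i) (\<alpha>' t) + d2 (\<alpha>' t) (\<beta> s)" using B.dtri pV qV sub by auto
      also have "\<dots> \<le> d2 (\<alpha> i) (\<alpha>' t) + (d2 (\<alpha>' t) (\<beta>' j) + d2 (\<beta>' j) (\<beta> s))" using B.dtri pV qV sub by auto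
      finally have "d2 (\<alpha> i) (\<beta> s) \<le> D'" using t j s unfolding D'_def by linarith
      then have "d1 (\<alpha> i) (\<beta> s) \<le> D'" using low pV qV by (meson le_trans)
      then show ?thesis using s by blast
    next
      assume "\<exists>j\<le>d2 c b. d2 (\<alpha>' t) (\<gamma>' j) \<le> D"
      then obtain j where j: "j \<le> d2 c b" "d2 (\<alpha>' t) (\<gamma>' j) \<le> D" by blast
      obtain s where s: "s \<le> d1 c b" "d2 (\<gamma>' j) (\<gamma> s) \<le> M" using m1c j by blast
      have qV: "\<gamma>' j \<in> V2" "\<gamma> s \<in> V1" using B.geod_in[OF gc' j(1)] A.geod_in[OF gc s(1)] by auto
      have "d2 (\<alpha> i) (\<gamma> s) \<le> d2 (\<alpha> i) (\<alpha>' t) + d2 (\<alpha>' t) (\<gamma> s)" using B.dtri pV qV sub by auto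
      also have "\<dots> \<le> d2 (\<alpha> i) (\<alpha>' t) + (d2 (\<alpha>' t) (\<gamma>' j) + d2 (\<gamma>' j) (\<gamma> s))" using B.dtri pV qV sub by auto
      finally have "d2 (\<alpha> i) (\<gamma> s) \<le> D'" using t j s unfolding D'_def by linarith
      then have "d1 (\<alpha> i) (\<gamma> s) \<le> D'" using low pV qV by (meson le_trans)
      then show ?thesis using s by blast
    qed
  qed
  then show ?thesis by blast
qed



definition wprod :: "('a, 'b) monoid_scheme \<Rightarrow> 'a list \<Rightarrow> 'a" where
  "wprod G ws = foldr (\<lambda>x y. x \<otimes>\<^bsub>G\<^esub> y) ws \<one>\<^bsub>G\<^esub>"

definition letters :: "('a, 'b) monoid_scheme \<Rightarrow> 'a set \<Rightarrow> 'a set" where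
  "letters G S = S \<union> (\<lambda>s. inv\<^bsub>G\<^esub> s) ` S"

definition wlen :: "('a, 'b) monoid_scheme \<Rightarrow> 'a set \<Rightarrow> 'a \<Rightarrow> nat" where
  "wlen G S g = (LEAST n. \<exists>ws. length ws = n \<and> set ws \<subseteq> letters G S \<and> wprod G ws = g)"

lemma word_dist_eq: "word_dist G S g h = wlen G S (inv\<^bsub>G\<^esub> g \<otimes>\<^bsub>G\<^esub> h)"
  by (simp add: word_dist_def wlen_def wprod_def letters_def)

context group begin

lemma letters_carrier: "S \<subseteq> carrier G \<Longrightarrow> letters G S \<subseteq> carrier G"
  unfolding letters_def by auto

lemma wprod_carrier: "set ws \<subseteq> carrier G \<Longrightarrow> wprod G ws \<in> carrier G"
  by (induction ws) (auto simp: wprod_def)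

lemma wprod_Nil [simp]: "wprod G [] = \<one>" by (simp add: wprod_def)
lemma wprod_Cons [simp]: "wprod G (x # ws) = x \<otimes> wprod G ws" by (simp add: wprod_def)

lemma wprod_append: "set ws \<subseteq> carrier G \<Longrightarrow> set vs \<subseteq> carrier G \<Longrightarrow> wprod G (ws @ vs) = wprod G ws \<otimes> wprod G vs"
  by (induction ws) (auto simp: m_assoc wprod_carrier)

lemma letters_inv: "S \<subseteq> carrier G \<Longrightarrow> x \<in> letters G S \<Longrightarrow> inv x \<in> letters G S"
  unfolding letters_def by (auto simp: subsetD)

lemma wprod_inv: "set ws \<subseteq> carrier G \<Longrightarrow> inv (wprod G ws) = wprod G (rev (map (\<lambda>z. inv z) ws))"
proof (induction ws)
  case Nil then show ?case by simp
next
  case (Cons x ws)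
  then have c: "x \<in> carrier G" "set ws \<subseteq> carrier G" by auto
  have "inv (wprod G (x # ws)) = inv (wprod G ws) \<otimes> inv x" using c by (simp add: inv_mult_group wprod_carrier)
  also have "\<dots> = wprod G (rev (map (\<lambda>z. inv z) ws)) \<otimes> wprod G [inv x]" using Cons c by simp
  also have "\<dots> = wprod G (rev (map (\<lambda>z. inv z) ws) @ [inv x])" using c by (subst wprod_append) auto
  finally show ?case by simp
qed


lemma gen_word: assumes "S \<subseteq> carrier G" shows "g \<in> generate G S \<Longrightarrow> \<exists>ws. set ws \<subseteq> letters G S \<and> wprod G ws = g"
proof (induction rule: generate.induct)
  case one then show ?case by (intro exI[of _ "[]"]) auto
next
  case (incl h) then show ?case using assms by (intro exI[of _ "[h]"]) (auto simp: letters_def)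
next
  case (inv h) then show ?case using assms by (intro exI[of _ "[inv h]"]) (auto simp: letters_def)
next
  case (eng h1 h2)
  then obtain w1 w2 where "set w1 \<subseteq> letters G S" "wprod G w1 = h1" "set w2 \<subseteq> letters G S" "wprod G w2 = h2" by blast
  then show ?case using letters_carrier[OF assms] by (intro exI[of _ "w1 @ w2"]) (auto simp: wprod_append)
qed

lemma word_gen: "set ws \<subseteq> letters G S \<Longrightarrow> wprod G ws \<in> generate G S"
proof (induction ws)
  case Nil then show ?case by (simp add: generate.one)
next
  case (Cons x ws)
  then have "x \<in> generate G S" unfolding letters_def by (auto intro: generate.incl generate.inv)
  then show ?case using Cons by (auto intro: generate.eng)
qed

end

locale wm = group G for G (structure) +
  fixes S assumes Ssub: "S \<subseteq> carrier G" and gen: "generate G S = carrier G"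
begin

lemma lc: "letters G S \<subseteq> carrier G" using letters_carrier[OF Ssub] .

lemma wlen_ex: "g \<in> carrier G \<Longrightarrow> \<exists>ws. length ws = wlen G S g \<and> set ws \<subseteq> letters G S \<and> wprod G ws = g"
proof -
  assume "g \<in> carrier G"
  then obtain ws where "set ws \<subseteq> letters G S \<and> wprod G ws = g" using gen_word[OF Ssub] gen by auto
  then have "\<exists>n ws. length ws = n \<and> set ws \<subseteq> letters G S \<and> wprod G ws = g" by blast
  from LeastI_ex[OF this] show ?thesis unfolding wlen_def .
qed

lemma wlen_le: "set ws \<subseteq> letters G S \<Longrightarrow> wprod G ws = g \<Longrightarrow> wlen G S g \<le> length ws"
  unfolding wlen_def by (rule Least_le) blast

lemma wlen_one: "wlen G S \<one> = 0" using wlen_le[of "[]" \<one>] by simp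

lemma wlen_mult: "g \<in> carrier G \<Longrightarrow> h \<in> carrier G \<Longrightarrow> wlen G S (g \<otimes> h) \<le> wlen G S g + wlen G S h"
proof -
  assume "g \<in> carrier G" "h \<in> carrier G"
  then obtain w1 w2 where w: "length w1 = wlen G S g" "set w1 \<subseteq> letters G S" "wprod G w1 = g"
    "length w2 = wlen G S h" "set w2 \<subseteq> letters G S" "wprod G w2 = h" using wlen_ex by metis
  then have "wprod G (w1 @ w2) = g \<otimes> h" using lc by (subst wprod_append) auto
  then show ?thesis using wlen_le[of "w1 @ w2"] w by auto
qed

lemma wlen_inv: "g \<in> carrier G \<Longrightarrow> wlen G S (inv g) \<le> wlen G S g"
proof -
  assume "g \<in> carrier G"
  then obtain w where w: "length w = wlen G S g" "set w \<subseteq> letters G S" "wprod G w = g" using wlen_ex by metis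
  have "set (rev (map (\<lambda>z. inv z) w)) \<subseteq> letters G S" using w letters_inv[OF Ssub] by auto
  moreover have "wprod G (rev (map (\<lambda>z. inv z) w)) = inv g" using wprod_inv w lc by auto
  ultimately have "wlen G S (inv g) \<le> length (rev (map (\<lambda>z. inv z) w))" by (rule wlen_le)
  then show ?thesis using w by simp
qed

abbreviation "dd \<equiv> word_dist G S"

lemma dd_le: "x \<in> carrier G \<Longrightarrow> set vs \<subseteq> letters G S \<Longrightarrow> y = x \<otimes> wprod G vs \<Longrightarrow> dd x y \<le> length vs"
proof -
  assume x: "x \<in> carrier G" and v: "set vs \<subseteq> letters G S" and y: "y = x \<otimes> wprod G vs"
  have pc: "wprod G vs \<in> carrier G" using v lc wprod_carrier by blast
  have "inv x \<otimes> y = wprod G vs" using x pc y by (simp add: m_assoc[symmetric])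
  then show ?thesis unfolding word_dist_eq using wlen_le[OF v] by simp
qed

lemma dd_refl: "x \<in> carrier G \<Longrightarrow> dd x x = 0" by (simp add: word_dist_eq wlen_one)

lemma dd_sym: assumes c: "x \<in> carrier G" "y \<in> carrier G" shows "dd x y = dd y x"
proof -
  have "dd x y \<le> dd y x" "dd y x \<le> dd x y" using wlen_inv[of "inv y \<otimes> x"] wlen_inv[of "inv x \<otimes> y"] c
    by (auto simp: word_dist_eq inv_mult_group)
  then show "dd x y = dd y x" by simp
qed

lemma dd_tri: assumes c: "x \<in> carrier G" "y \<in> carrier G" "z \<in> carrier G" shows "dd x z \<le> dd x y + dd y z"
proof -
  have "inv x \<otimes> z = (inv x \<otimes> y) \<otimes> (inv y \<otimes> z)" using c by (simp add: m_assoc[symmetric] r_inv) (simp add: m_assoc)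
  then show "dd x z \<le> dd x y + dd y z" using wlen_mult[of "inv x \<otimes> y" "inv y \<otimes> z"] c by (simp add: word_dist_eq)
qed

lemma dd_geod: assumes c: "x \<in> carrier G" "y \<in> carrier G" shows "\<exists>g. geod (carrier G) dd g x y"
proof -
  obtain ws where w: "length ws = dd x y" "set ws \<subseteq> letters G S" "wprod G ws = inv x \<otimes> y"
    using wlen_ex[of "inv x \<otimes> y"] c by (auto simp: word_dist_eq)
  define g where "g i = x \<otimes> wprod G (take i ws)" for i
  have tc: "\<And>i. set (take i ws) \<subseteq> carrier G" "\<And>i. set (drop i ws) \<subseteq> carrier G"
    using w lc by (meson order.trans set_take_subset set_drop_subset)+
  have gC: "\<And>i. g i \<in> carrier G" unfolding g_def using c tc wprod_carrier by auto
  have step: "\<And>i j. i \<le> j \<Longrightarrow> g j = g i \<otimes> wprod G (take (j - i) (drop i ws))"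
  proof -
    fix i j :: nat assume "i \<le> j"
    then have "take j ws = take i ws @ take (j - i) (drop i ws)" by (metis le_add_diff_inverse take_add)
    moreover have "set (take (j - i) (drop i ws)) \<subseteq> carrier G" using tc by (meson order.trans set_take_subset)
    ultimately show "g j = g i \<otimes> wprod G (take (j - i) (drop i ws))" unfolding g_def
      using tc c by (simp add: wprod_append m_assoc wprod_carrier)
  qed
  have lw: "\<And>i. set (take i ws) \<subseteq> letters G S" "\<And>i j. set (take j (drop i ws)) \<subseteq> letters G S"
    using w by (meson order.trans set_take_subset set_drop_subset)+
  have g0: "g 0 = x" unfolding g_def using c by simp
  have gn: "g (dd x y) = y" unfolding g_def using c w by (simp add: m_assoc[symmetric])
  have up: "\<And>i j. i \<le> j \<Longrightarrow> dd (g i) (g j) \<le> j - i"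
  proof -
    fix i j :: nat assume ij: "i \<le> j"
    have "dd (g i) (g j) \<le> length (take (j - i) (drop i ws))" using dd_le[OF gC lw(2) step[OF ij]] .
    then show "dd (g i) (g j) \<le> j - i" by simp
  qed
  show "\<exists>g. geod (carrier G) dd g x y"
    unfolding geod_def
  proof (intro exI[of _ g] conjI allI impI)
    show "g 0 = x" "g (dd x y) = y" by (fact g0, fact gn)
    fix i assume "i \<le> dd x y" then show "g i \<in> carrier G" using gC by auto
  next
    fix i j assume ij: "i \<le> j" "j \<le> dd x y"
    have tri: "dd x y \<le> dd x (g i) + dd (g i) (g j) + dd (g j) y"
      using dd_tri[OF c(1) gC[of i] c(2)] dd_tri[OF gC[of i] gC[of j] c(2)] by linarith
    show "dd (g i) (g j) = j - i" using up[of 0 i] up[OF ij(1)] up[of j "dd x y"] g0 gn ij tri by fastforce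
  qed
qed

lemma gm_dd: "gm (carrier G) dd"
proof
  show "\<And>x. x \<in> carrier G \<Longrightarrow> dd x x = 0" by (rule dd_refl)
  show "\<And>x y. x \<in> carrier G \<Longrightarrow> y \<in> carrier G \<Longrightarrow> dd x y = dd y x" by (rule dd_sym)
  show "\<And>x y z. x \<in> carrier G \<Longrightarrow> y \<in> carrier G \<Longrightarrow> z \<in> carrier G \<Longrightarrow> dd x z \<le> dd x y + dd y z" by (rule dd_tri)
  show "\<And>x y. x \<in> carrier G \<Longrightarrow> y \<in> carrier G \<Longrightarrow> \<exists>g. geod (carrier G) dd g x y" by (rule dd_geod)
qed

end

lemma hyp_to_hyp4:
  assumes gm: "gm V d" and h: "gromov_hyperbolic_on V (\<lambda>g h. real (d g h))"
  shows "\<exists>K. gm.hyp4 V d K"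
proof -
  interpret A: gm V d by (rule gm)
  obtain \<delta> :: real where \<delta>: "\<delta> \<ge> 0" and H: "\<forall>x\<in>V. \<forall>y\<in>V. \<forall>z\<in>V. \<forall>w\<in>V.
      gromov_prod (\<lambda>g h. real (d g h)) w x z \<ge> min (gromov_prod (\<lambda>g h. real (d g h)) w x y) (gromov_prod (\<lambda>g h. real (d g h)) w y z) - \<delta>"
    using h unfolding gromov_hyperbolic_on_def by blast
  define K where "K = nat \<lceil>2*\<delta>\<rceil>"
  have K: "2*\<delta> \<le> real K" unfolding K_def by linarith
  have "A.hyp4 K" unfolding A.hyp4_def
  proof (intro ballI)
    fix x y z w assume V: "x \<in> V" "y \<in> V" "z \<in> V" "w \<in> V"
    have gp: "\<And>a b. gromov_prod (\<lambda>g h. real (d g h)) w a b = real_of_int (A.Gp a b w) / 2"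
      unfolding gromov_prod_def A.Gp_def by simp
    have "real_of_int (A.Gp x z w) / 2 \<ge> min (real_of_int (A.Gp x y w) / 2) (real_of_int (A.Gp y z w) / 2) - \<delta>"
      using H V gp[of x y] gp[of y z] gp[of x z] by metis
    then have "real_of_int (A.Gp x z w) \<ge> real_of_int (min (A.Gp x y w) (A.Gp y z w)) - real K"
      using K by (simp add: min_def split: if_splits)
    then have "real_of_int (A.Gp x z w) \<ge> real_of_int (min (A.Gp x y w) (A.Gp y z w) - int K)" by simp
    then show "min (A.Gp x y w) (A.Gp y z w) - int K \<le> A.Gp x z w" by linarith
  qed
  then show ?thesis by blast
qed

lemma hyp4_to_hyp:
  assumes gm: "gm V d" and h: "gm.hyp4 V d K"
  shows "gromov_hyperbolic_on V (\<lambda>g h. real (d g h))"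
proof -
  interpret A: gm V d by (rule gm)
  show ?thesis unfolding gromov_hyperbolic_on_def
  proof (intro exI[of _ "real K / 2"] conjI ballI)
    show "real K / 2 \<ge> 0" by simp
    fix x y z w assume V: "x \<in> V" "y \<in> V" "z \<in> V" "w \<in> V"
    have gp: "\<And>a b. gromov_prod (\<lambda>g h. real (d g h)) w a b = real_of_int (A.Gp a b w) / 2"
      unfolding gromov_prod_def A.Gp_def by simp
    have "min (A.Gp x y w) (A.Gp y z w) - int K \<le> A.Gp x z w" using h V unfolding A.hyp4_def by blast
    then have "real_of_int (min (A.Gp x y w) (A.Gp y z w) - int K) \<le> real_of_int (A.Gp x z w)" by linarith
    then show "min (gromov_prod (\<lambda>g h. real (d g h)) w x y) (gromov_prod (\<lambda>g h. real (d g h)) w y z) - real K / 2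
        \<le> gromov_prod (\<lambda>g h. real (d g h)) w x z"
      unfolding gp by (simp add: min_def split: if_splits)
  qed
qed


theorem lemma3p3:
  fixes G :: "('a, 'b) monoid_scheme" and R :: "'a set" and As :: "'a set list"
  assumes "group G"
    and "retract R G"
    and "weakly_rel_hyperbolic G As"
    and "\<forall>A\<in>set As. A \<subseteq> R"
  shows "weakly_rel_hyperbolic (G\<lparr>carrier := R\<rparr>) As"
proof -
  interpret G: group G by fact
  have subR: "subgroup R G" using assms(2) unfolding retract_def by blast
  obtain r where rhom: "r \<in> hom G (G\<lparr>carrier := R\<rparr>)" and rid: "\<forall>x\<in>R. r x = x"
    using assms(2) unfolding retract_def by blast
  have grpR: "group (G\<lparr>carrier := R\<rparr>)" using G.subgroup_imp_group[OF subR] .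
  interpret hr: group_hom G "G\<lparr>carrier := R\<rparr>" r
    unfolding group_hom_def group_hom_axioms_def using assms(1) grpR rhom by blast
  define U where "U = \<Union>(set As)"
  have HsG: "\<forall>H\<in>set As. subgroup H G" using assms(3) unfolding weakly_rel_hyperbolic_def by blast
  obtain S0 where S0: "finite S0" "S0 \<subseteq> carrier G" and gen: "generate G (S0 \<union> U) = carrier G"
    and hyp: "gromov_hyperbolic_on (carrier G) (\<lambda>g h. real (word_dist G (S0 \<union> U) g h))"
    using assms(3) unfolding weakly_rel_hyperbolic_def U_def by blast
  have UR: "U \<subseteq> R" using assms(4) U_def by auto
  have RG: "R \<subseteq> carrier G" using subR subgroup.subset by blast
  define S where "S = S0 \<union> U"
  define S' where "S' = r ` S0 \<union> U"
  have rR: "\<And>x. x \<in> carrier G \<Longrightarrow> r x \<in> R" using hr.hom_closed by simp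
  have S'R: "S' \<subseteq> R" unfolding S'_def using rR S0 UR by auto
  have SG: "S \<subseteq> carrier G" unfolding S_def using S0 UR RG by auto
  interpret WG: wm G S by unfold_locales (use SG gen S_def in auto)
  have Rinv: "\<And>x. x \<in> R \<Longrightarrow> inv\<^bsub>G\<lparr>carrier := R\<rparr>\<^esub> x = inv\<^bsub>G\<^esub> x" using G.m_inv_consistent[OF subR] by blast
  have wpR: "\<And>ws. wprod (G\<lparr>carrier := R\<rparr>) ws = wprod G ws" unfolding wprod_def by simp
  have lettR: "letters (G\<lparr>carrier := R\<rparr>) S' = letters G S'"
  proof -
    have "(\<lambda>s. inv\<^bsub>G\<lparr>carrier := R\<rparr>\<^esub> s) ` S' = (\<lambda>s. inv\<^bsub>G\<^esub> s) ` S'"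
      using Rinv S'R by (intro image_cong) auto
    then show ?thesis unfolding letters_def by simp
  qed
  have mapr: "\<And>ws. set ws \<subseteq> letters G S \<Longrightarrow> set (map r ws) \<subseteq> letters G S' \<and> wprod G (map r ws) = r (wprod G ws)"
  proof -
    fix ws show "set ws \<subseteq> letters G S \<Longrightarrow> set (map r ws) \<subseteq> letters G S' \<and> wprod G (map r ws) = r (wprod G ws)"
    proof (induction ws)
      case Nil then show ?case using hr.hom_one by simp
    next
      case (Cons x ws)
      then have x: "x \<in> letters G S" and IH: "set (map r ws) \<subseteq> letters G S' \<and> wprod G (map r ws) = r (wprod G ws)" by auto
      have xc: "x \<in> carrier G" using x WG.lc by auto
      have "r x \<in> letters G S'"
      proof -
        have "x \<in> S \<or> (\<exists>s\<in>S. x = inv\<^bsub>G\<^esub> s)" using x unfolding letters_def by auto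
        then show ?thesis
        proof
          assume "x \<in> S"
          then have "r x \<in> S'" unfolding S_def S'_def using rid UR by auto
          then show ?thesis unfolding letters_def by auto
        next
          assume "\<exists>s\<in>S. x = inv\<^bsub>G\<^esub> s"
          then obtain s where s: "s \<in> S" "x = inv\<^bsub>G\<^esub> s" by blast
          have "r s \<in> S'" using s unfolding S_def S'_def using rid UR by auto
          moreover have "r x = inv\<^bsub>G\<^esub> (r s)" using s SG hr.hom_inv Rinv rR by auto
          ultimately show ?thesis unfolding letters_def by auto
        qed
      qed
      moreover have "wprod G (map r (x # ws)) = r (wprod G (x # ws))"
        using IH xc G.wprod_carrier[of ws] Cons.prems WG.lc hr.hom_mult by auto
      ultimately show ?case using IH by simp
    qed
  qed
  have genR: "generate (G\<lparr>carrier := R\<rparr>) S' = R"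
  proof
    show "generate (G\<lparr>carrier := R\<rparr>) S' \<subseteq> R" using group.generate_incl[OF grpR] S'R by simp
  next
    show "R \<subseteq> generate (G\<lparr>carrier := R\<rparr>) S'"
    proof
      fix x assume xR: "x \<in> R"
      then obtain ws where ws: "set ws \<subseteq> letters G S" "wprod G ws = x" using G.gen_word[OF SG] gen S_def RG by blast
      then have "set (map r ws) \<subseteq> letters (G\<lparr>carrier := R\<rparr>) S'" "wprod (G\<lparr>carrier := R\<rparr>) (map r ws) = x"
        using mapr[OF ws(1)] lettR wpR rid xR by auto
      then show "x \<in> generate (G\<lparr>carrier := R\<rparr>) S'" using group.word_gen[OF grpR] by metis
    qed
  qed
  interpret WR: wm "G\<lparr>carrier := R\<rparr>" S' by unfold_locales (use S'R genR in auto)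
  define d1 where "d1 = word_dist (G\<lparr>carrier := R\<rparr>) S'"
  define d2 where "d2 = word_dist G S"
  have gm1: "gm R d1" using WR.gm_dd unfolding d1_def by simp
  have gm2: "gm (carrier G) d2" using WG.gm_dd unfolding d2_def .
  have low: "\<forall>a\<in>R. \<forall>b\<in>R. d1 a b \<le> d2 a b"
  proof (intro ballI)
    fix a b assume ab: "a \<in> R" "b \<in> R"
    then have abc: "a \<in> carrier G" "b \<in> carrier G" using RG by auto
    obtain ws where ws: "length ws = wlen G S (inv\<^bsub>G\<^esub> a \<otimes>\<^bsub>G\<^esub> b)" "set ws \<subseteq> letters G S" "wprod G ws = inv\<^bsub>G\<^esub> a \<otimes>\<^bsub>G\<^esub> b"
      using WG.wlen_ex abc by blast
    have "r (inv\<^bsub>G\<^esub> a \<otimes>\<^bsub>G\<^esub> b) = inv\<^bsub>G\<^esub> a \<otimes>\<^bsub>G\<^esub> b"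
      using abc ab rid hr.hom_mult hr.hom_inv Rinv by simp
    then have "wprod (G\<lparr>carrier := R\<rparr>) (map r ws) = inv\<^bsub>G\<lparr>carrier := R\<rparr>\<^esub> a \<otimes>\<^bsub>G\<lparr>carrier := R\<rparr>\<^esub> b"
      using mapr[OF ws(2)] ws wpR Rinv ab by simp
    moreover have "set (map r ws) \<subseteq> letters (G\<lparr>carrier := R\<rparr>) S'" using mapr[OF ws(2)] lettR by simp
    ultimately have "wlen (G\<lparr>carrier := R\<rparr>) S' (inv\<^bsub>G\<lparr>carrier := R\<rparr>\<^esub> a \<otimes>\<^bsub>G\<lparr>carrier := R\<rparr>\<^esub> b) \<le> length (map r ws)"
      using WR.wlen_le by blast
    then show "d1 a b \<le> d2 a b" unfolding d1_def d2_def word_dist_eq using ws by simp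
  qed
  define C where "C = 1 + (\<Sum>s\<in>S0. wlen G S (r s))"
  have letC: "\<And>l. l \<in> letters G S' \<Longrightarrow> wlen G S l \<le> C"
  proof -
    fix l assume l: "l \<in> letters G S'"
    have rs: "\<And>s. s \<in> S0 \<Longrightarrow> wlen G S (r s) \<le> C"
    proof -
      fix s assume "s \<in> S0"
      then have "wlen G S (r s) \<le> (\<Sum>s\<in>S0. wlen G S (r s))" using S0(1) by (intro member_le_sum) auto
      then show "wlen G S (r s) \<le> C" unfolding C_def by simp
    qed
    have u1: "\<And>u. u \<in> U \<Longrightarrow> wlen G S u \<le> 1"
    proof -
      fix u assume "u \<in> U"
      then have "set [u] \<subseteq> letters G S" "wprod G [u] = u" using RG UR unfolding S_def letters_def by auto
      then show "wlen G S u \<le> 1" using WG.wlen_le by fastforce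
    qed
    have u2: "\<And>u. u \<in> U \<Longrightarrow> wlen G S (inv\<^bsub>G\<^esub> u) \<le> 1"
      using u1 WG.wlen_inv RG UR by (meson le_trans subsetD)
    have "l \<in> r ` S0 \<or> l \<in> U \<or> (\<exists>s\<in>S0. l = inv\<^bsub>G\<^esub> (r s)) \<or> (\<exists>u\<in>U. l = inv\<^bsub>G\<^esub> u)"
      using l unfolding letters_def S'_def by auto
    then show "wlen G S l \<le> C"
    proof (elim disjE)
      assume "l \<in> r ` S0" then show ?thesis using rs by auto
    next
      assume "l \<in> U" then show ?thesis using u1 C_def by fastforce
    next
      assume "\<exists>s\<in>S0. l = inv\<^bsub>G\<^esub> (r s)"
      then obtain s where s: "s \<in> S0" "l = inv\<^bsub>G\<^esub> (r s)" by blast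
      then have "wlen G S l \<le> wlen G S (r s)" using WG.wlen_inv rR S0 RG by blast
      then show ?thesis using rs s by (meson le_trans)
    next
      assume "\<exists>u\<in>U. l = inv\<^bsub>G\<^esub> u" then show ?thesis using u2 C_def by fastforce
    qed
  qed
  have step: "\<forall>a\<in>R. \<forall>b\<in>R. d1 a b = 1 \<longrightarrow> d2 a b \<le> C"
  proof (intro ballI impI)
    fix a b assume ab: "a \<in> R" "b \<in> R" and d: "d1 a b = 1"
    have c: "inv\<^bsub>G\<lparr>carrier := R\<rparr>\<^esub> a \<otimes>\<^bsub>G\<lparr>carrier := R\<rparr>\<^esub> b \<in> carrier (G\<lparr>carrier := R\<rparr>)"
      using ab group.inv_closed[OF grpR] monoid.m_closed[OF group.is_monoid[OF grpR]] by simp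
    obtain ws where ws: "length ws = 1" "set ws \<subseteq> letters (G\<lparr>carrier := R\<rparr>) S'"
      "wprod (G\<lparr>carrier := R\<rparr>) ws = inv\<^bsub>G\<lparr>carrier := R\<rparr>\<^esub> a \<otimes>\<^bsub>G\<lparr>carrier := R\<rparr>\<^esub> b"
      using WR.wlen_ex[OF c] d unfolding d1_def word_dist_eq by metis
    then obtain l where l: "ws = [l]" by (metis One_nat_def length_0_conv length_Suc_conv)
    have lG: "l \<in> letters G S'" using ws l lettR by auto
    have lc: "l \<in> carrier G" using lG S'R RG G.letters_carrier by blast
    have "inv\<^bsub>G\<^esub> a \<otimes>\<^bsub>G\<^esub> b = l" using ws(3) l Rinv ab lc by simp
    then show "d2 a b \<le> C" unfolding d2_def word_dist_eq using letC[OF lG] by simp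
  qed
  obtain K where K: "gm.hyp4 (carrier G) d2 K" using hyp_to_hyp4[OF gm2] hyp unfolding d2_def S_def by blast
  have sl2: "gm.slim (carrier G) d2 (2*K+1)" using gm.L1[OF gm2 K] .
  obtain D' where sl1: "gm.slim R d1 D'" using transfer[OF gm1 gm2 RG low step sl2] by blast
  have h1: "gm.hyp4 R d1 (6*D'+4)" using gm.L2[OF gm1 sl1] .
  have hypR: "gromov_hyperbolic_on R (\<lambda>g h. real (d1 g h))" using hyp4_to_hyp[OF gm1 h1] .
  show ?thesis unfolding weakly_rel_hyperbolic_def
  proof (intro conjI ballI exI[of _ "r ` S0"])
    fix H assume "H \<in> set As"
    then show "subgroup H (G\<lparr>carrier := R\<rparr>)" using G.subgroup_incl HsG subR assms(4) by blast
  next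
    show "finite (r ` S0)" using S0 by simp
    show "r ` S0 \<subseteq> carrier (G\<lparr>carrier := R\<rparr>)" using rR S0 by auto
    show "generate (G\<lparr>carrier := R\<rparr>) (r ` S0 \<union> \<Union>(set As)) = carrier (G\<lparr>carrier := R\<rparr>)"
      using genR unfolding S'_def U_def by simp
    show "gromov_hyperbolic_on (carrier (G\<lparr>carrier := R\<rparr>))
        (\<lambda>g h. real (word_dist (G\<lparr>carrier := R\<rparr>) (r ` S0 \<union> \<Union>(set As)) g h))"
      using hypR unfolding d1_def S'_def U_def by simp
  qed
qed

end
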